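(* Assume the two-band model with RD-optimal compression described in the context, with common per-sensor rate $R>0$ (so that $0\le\lambda<S_{\rm L}+N_0$ and $B_{\rm L}>0$), and let $\mathbf p\in\mathbb R^d$ be distinct from all sensor positions. Then the Fisher-information rate matrix satisfies $$\mathbf J^{\rm RD}_\infty(\mathbf p)=\frac{4\pi^2}{3}\big(J_{\rm L}(R)+J_{\rm H}(R)\big)\,\mathbf G(\mathbf p).$$ Consequently, whenever $\mathbf G(\mathbf p)$ is nonsingular, $$\big(\mathbf J^{\rm RD}_\infty(\mathbf p)\big)^{-1}=\frac{3}{4\pi^2}\,\frac{1}{J_{\rm L}(R)+J_{\rm H}(R)}\,\mathbf G^{-1}(\mathbf p),$$ so that the CRLB for any unbiased estimator $\widehat{\mathbf p}$ based on the compressed observations over $[0,T]$ reads $\mathrm{Cov}(\widehat{\mathbf p}-\mathbf p)\succeq \frac{1}{T}\big(\mathbf J^{\rm RD}_\infty(\mathbf p)\big)^{-1}+o(1/T)$.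
   Context: Setup. Let $M\ge2$, $d\ge1$, sensor positions $\mathbf p_1,\dots,\mathbf p_M\in\mathbb R^d$, propagation speed $c>0$, unknown source location $\mathbf p\in\mathbb R^d$, and $\tau_m(\mathbf p)=\|\mathbf p-\mathbf p_m\|_2/c$. Let $\mathbf v(f;\mathbf p)=[e^{-j2\pi f\tau_1(\mathbf p)},\dots,e^{-j2\pi f\tau_M(\mathbf p)}]^T\in\mathbb C^M$. Two-band model: fix $0<f_{\rm L}<f_{\rm H}$, $S_{\rm L}>S_{\rm H}>0$, $N_0>0$; bands $\mathcal B_{\rm L}=\{f:|f|\le f_{\rm L}\}$, $\mathcal B_{\rm H}=\{f:f_{\rm L}<|f|\le f_{\rm H}\}$. Source PSD $S_s(f)=S_{\rm L}$ on $\mathcal B_{\rm L}$, $S_{\rm H}$ on $\mathcal B_{\rm H}$, $0$ for $|f|>f_{\rm H}$; every sensor has noise PSD $N_0$ on $|f|\le f_{\rm H}$ and $0$ otherwise; sensor $m$ observes $x_m(t)=s(t-\tau_m(\mathbf p))+n_m(t)$ with independent Gaussian noises. RD-optimal compression with common rate $R$: the water level $\lambda=\lambda(R)\ge0$ solves $R=f_{\rm L}[\log_2((S_{\rm L}+N_0)/\lambda)]^++(f_{\rm H}-f_{\rm L})[\log_2((S_{\rm H}+N_0)/\lambda)]^+$, where $[u]^+=\max\{u,0\}$. The gain is $B(f)=[1-\lambda/(S_s(f)+N_0)]^+$ for $|f|\le f_{\rm H}$ and $0$ otherwise; it takes the constant value $B_b=B_b(R)$ on $\mathcal B_b$, $b\in\{{\rm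 L},{\rm H}\}$. The compressed observation at sensor $m$ is $\widehat x_m=b*x_m+z_m$ with independent Gaussian compression noise of PSD $\lambda B(f)$. The compressed cross-spectral density matrix is $\mathbf S(f;\mathbf p)=S_s(f)B(f)^2\mathbf v\mathbf v^H+S_w(f)\mathbf I_M$, with $S_w(f)=B(f)^2N_0+\lambda B(f)$. Fisher-information rate (Whittle): $[\mathbf J^{\rm RD}_\infty(\mathbf p)]_{ij}=\frac12\int_{\{f:\,|f|\le f_{\rm H},\,B(f)>0\}}\mathrm{tr}\big(\mathbf S^{-1}\,\partial_{p_i}\mathbf S\,\mathbf S^{-1}\,\partial_{p_j}\mathbf S\big)\,df$, $1\le i,j\le d$ (frequencies with $B(f)=0$ carry no signal and contribute zero); the Fisher information over $[0,T]$ is $T\mathbf J^{\rm RD}_\infty+o(T)$. Band quantities: for $b$ with $B_b>0$, $S_{w,b}=B_b^2N_0+\lambda B_b$, $\gamma_b=S_bB_b^2/S_{w,b}$, $w_b(R)=2M\gamma_b^2/(1+M\gamma_b)$; if $B_b=0$ set $w_b(R)=0$. Define $J_{\rm L}(R)=f_{\rm L}^3w_{\rm L}(R)$ and $J_{\rm H}(R)=(f_{\rm H}^3-f_{\rm L}^3)w_{\rm H}(R)$. Geometry: $\mathbf g_i(\mathbf p)=[\partial\tau_1/\partial p_i,\dots,\partial\tau_M/\partial p_i]^T$ with $\partial\tau_m/\partial p_i=\frac1c\frac{p_i-[\mathbf p_m]_i}{\|\mathbf p-\mathbf p_m\|_2}$; $\mathbf P=\mathbf I_M-\frac1M\mathbf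 1\mathbf 1^T$; $\tilde{\mathbf g}_i=\mathbf P\mathbf g_i$; $[\mathbf G(\mathbf p)]_{ij}=\tilde{\mathbf g}_i^T\tilde{\mathbf g}_j$. *)

theory Defs
  imports "HOL-Analysis.Analysis"
begin

definition Ss :: "real \<Rightarrow> real \<Rightarrow> real \<Rightarrow> real \<Rightarrow> real \<Rightarrow> real" where
  "Ss fL fH SL SH f = (if \<bar>f\<bar> \<le> fL then SL else if \<bar>f\<bar> \<le> fH then SH else 0)"

definition Bgain :: "real \<Rightarrow> real \<Rightarrow> real \<Rightarrow> real \<Rightarrow> real \<Rightarrow> real \<Rightarrow> real \<Rightarrow> real" where
  "Bgain fL fH SL SH N0 lam f =
     (if \<bar>f\<bar> \<le> fH then max 0 (1 - lam / (Ss fL fH SL SH f + N0)) else 0)"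

definition Sw :: "real \<Rightarrow> real \<Rightarrow> real \<Rightarrow> real \<Rightarrow> real \<Rightarrow> real \<Rightarrow> real \<Rightarrow> real" where
  "Sw fL fH SL SH N0 lam f =
     (Bgain fL fH SL SH N0 lam f)^2 * N0 + lam * Bgain fL fH SL SH N0 lam f"

definition rate_of_level :: "real \<Rightarrow> real \<Rightarrow> real \<Rightarrow> real \<Rightarrow> real \<Rightarrow> real \<Rightarrow> real" where
  "rate_of_level fL fH SL SH N0 lam =
     fL * max 0 (log 2 ((SL + N0) / lam)) + (fH - fL) * max 0 (log 2 ((SH + N0) / lam))"

definition tau :: "real \<Rightarrow> ('m \<Rightarrow> real^'d) \<Rightarrow> real^'d \<Rightarrow> 'm \<Rightarrow> real" where
  "tau c pp p m = norm (p - pp m) / c"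

definition steer :: "real \<Rightarrow> ('m::finite \<Rightarrow> real^'d) \<Rightarrow> real \<Rightarrow> real^'d \<Rightarrow> complex^'m" where
  "steer c pp f p = (\<chi> m. exp (- \<i> * of_real (2 * pi * f * tau c pp p m)))"

definition Smat :: "real \<Rightarrow> ('m::finite \<Rightarrow> real^'d) \<Rightarrow> real \<Rightarrow> real \<Rightarrow> real \<Rightarrow> real \<Rightarrow> real \<Rightarrow> real
                    \<Rightarrow> real \<Rightarrow> real^'d \<Rightarrow> complex^'m^'m" where
  "Smat c pp fL fH SL SH N0 lam f p =
     (\<chi> a b. of_real (Ss fL fH SL SH f * (Bgain fL fH SL SH N0 lam f)^2)
               * (steer c pp f p $ a) * cnj (steer c pp f p $ b)
             + (if a = b then of_real (Sw fL fH SL SH N0 lam f) else 0))"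

definition dSmat :: "real \<Rightarrow> ('m::finite \<Rightarrow> real^'d) \<Rightarrow> real \<Rightarrow> real \<Rightarrow> real \<Rightarrow> real \<Rightarrow> real \<Rightarrow> real
                    \<Rightarrow> 'd::finite \<Rightarrow> real \<Rightarrow> real^'d \<Rightarrow> complex^'m^'m" where
  "dSmat c pp fL fH SL SH N0 lam i f p =
     vector_derivative (\<lambda>t. Smat c pp fL fH SL SH N0 lam f (p + t *\<^sub>R axis i 1)) (at 0)"

definition fisher_integrand :: "real \<Rightarrow> ('m::finite \<Rightarrow> real^'d) \<Rightarrow> real \<Rightarrow> real \<Rightarrow> real \<Rightarrow> real \<Rightarrow> real \<Rightarrow> real
                    \<Rightarrow> real^'d \<Rightarrow> 'd::finite \<Rightarrow> 'd \<Rightarrow> real \<Rightarrow> complex" where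
  "fisher_integrand c pp fL fH SL SH N0 lam p i j f =
     (let Si = matrix_inv (Smat c pp fL fH SL SH N0 lam f p) in
      trace (Si ** dSmat c pp fL fH SL SH N0 lam i f p ** Si ** dSmat c pp fL fH SL SH N0 lam j f p))"

definition active_band :: "real \<Rightarrow> real \<Rightarrow> real \<Rightarrow> real \<Rightarrow> real \<Rightarrow> real \<Rightarrow> real set" where
  "active_band fL fH SL SH N0 lam = {f. \<bar>f\<bar> \<le> fH \<and> Bgain fL fH SL SH N0 lam f > 0}"

text \<open>Fisher-information rate matrix J^RD_infinity(p) (the trace is real; we take the real part).\<close>
definition J_RD :: "real \<Rightarrow> ('m::finite \<Rightarrow> real^'d) \<Rightarrow> real \<Rightarrow> real \<Rightarrow> real \<Rightarrow> real \<Rightarrow> real \<Rightarrow> real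
                    \<Rightarrow> real^'d \<Rightarrow> real^'d^'d" where
  "J_RD c pp fL fH SL SH N0 lam p =
     (\<chi> i j. Re (integral (active_band fL fH SL SH N0 lam)
                       (fisher_integrand c pp fL fH SL SH N0 lam p i j)) / 2)"

definition band_w :: "nat \<Rightarrow> real \<Rightarrow> real \<Rightarrow> real \<Rightarrow> real \<Rightarrow> real" where
  "band_w M N0 lam Sb Bb =
     (if Bb > 0 then
        (let Swb = Bb^2 * N0 + lam * Bb; \<gamma> = Sb * Bb^2 / Swb in
         2 * real M * \<gamma>^2 / (1 + real M * \<gamma>))
      else 0)"

definition J_L :: "nat \<Rightarrow> real \<Rightarrow> real \<Rightarrow> real \<Rightarrow> real \<Rightarrow> real" where
  "J_L M fL SL N0 lam = fL^3 * band_w M N0 lam SL (max 0 (1 - lam / (SL + N0)))"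

definition J_H :: "nat \<Rightarrow> real \<Rightarrow> real \<Rightarrow> real \<Rightarrow> real \<Rightarrow> real \<Rightarrow> real" where
  "J_H M fL fH SH N0 lam = (fH^3 - fL^3) * band_w M N0 lam SH (max 0 (1 - lam / (SH + N0)))"

definition gvec :: "real \<Rightarrow> ('m::finite \<Rightarrow> real^'d) \<Rightarrow> real^'d \<Rightarrow> 'd::finite \<Rightarrow> real^'m" where
  "gvec c pp p i = (\<chi> m. (1 / c) * ((p $ i - pp m $ i) / norm (p - pp m)))"

definition Pcent :: "real^'m::finite^'m" where
  "Pcent = mat 1 - (1 / real CARD('m)) *\<^sub>R (\<chi> a b. 1)"

definition Gmat :: "real \<Rightarrow> ('m::finite \<Rightarrow> real^'d) \<Rightarrow> real^'d \<Rightarrow> real^'d::finite^'d" where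
  "Gmat c pp p = (\<chi> i j. (Pcent *v gvec c pp p i) \<bullet> (Pcent *v gvec c pp p j))"

end

theory Submission
  imports Defs
begin


definition Sinv_m :: "complex^'m::finite \<Rightarrow> complex \<Rightarrow> complex \<Rightarrow> complex^'m^'m" where
  "Sinv_m v A s = (\<chi> a b. (if a = b then 1/s else 0) - A/(s*(s + A * of_nat CARD('m))) * v$a * cnj(v$b))"

definition S_m :: "complex^'m::finite \<Rightarrow> complex \<Rightarrow> complex \<Rightarrow> complex^'m^'m" where
  "S_m v A s = (\<chi> a b. A * v$a * cnj(v$b) + (if a = b then s else 0))"

definition dS_m :: "complex^'m::finite \<Rightarrow> complex \<Rightarrow> ('m \<Rightarrow> complex) \<Rightarrow> complex^'m^'m" where
  "dS_m v K g = (\<chi> a b. K * (g a - g b) * v$a * cnj(v$b))"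

lemma sum_vv:
  fixes v :: "complex^'m::finite"
  assumes hv: "\<And>k. v$k * cnj (v$k) = 1"
  shows "(\<Sum>k\<in>UNIV. cnj (v$k) * v$k * h k) = (\<Sum>k\<in>UNIV. h k)"
  using hv by (simp add: mult.commute)

lemma S_Sinv:
  fixes v :: "complex^'m::finite"
  assumes hv: "\<And>k. v$k * cnj (v$k) = 1" and s: "s \<noteq> 0" and sA: "s + A * of_nat CARD('m) \<noteq> 0"
  shows "S_m v A s ** Sinv_m v A s = mat 1"
proof -
  define kk where "kk = A/(s*(s + A * of_nat CARD('m)))"
  have "(S_m v A s ** Sinv_m v A s) $ a $ b = (if a = b then 1 else 0)" for a b
  proof -
    have "(S_m v A s ** Sinv_m v A s) $ a $ b =
      (\<Sum>k\<in>UNIV. (if k = b then A * v$a * cnj (v$b) / s else 0)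
                 - kk * A * v$a * cnj(v$b) * (cnj (v$k) * v$k)
                 + (if a = k then (if k = b then 1 else 0) else 0)
                 - (if a = k then s * kk * v$a * cnj(v$b) else 0))"
      unfolding S_m_def Sinv_m_def matrix_matrix_mult_def kk_def[symmetric]
      by (simp only: vec_lambda_beta, intro sum.cong refl) (use s in \<open>auto simp: algebra_simps\<close>)
    also have "\<dots> = A * v$a * cnj (v$b) / s - kk * A * v$a * cnj(v$b) * of_nat CARD('m)
                 + (if a = b then 1 else 0) - s * kk * v$a * cnj(v$b)"
      using hv by (simp add: sum.distrib sum_subtractf mult.commute)
    also have "\<dots> = (if a = b then 1 else 0)"
    proof -
      have d: "s * (s + A * of_nat CARD('m)) \<noteq> 0" using s sA by simp
      have c0: "A/s - kk*A* of_nat CARD('m) - s*kk = 0"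
        using s sA d unfolding kk_def by (simp add: field_simps)
      have "A * v$a * cnj (v$b) / s - kk * A * v$a * cnj(v$b) * of_nat CARD('m)
                 + (if a = b then 1 else 0) - s * kk * v$a * cnj(v$b)
            = (if a = b then 1 else 0) + v$a*cnj(v$b)*(A/s - kk*A* of_nat CARD('m) - s*kk)"
        by (simp add: algebra_simps)
      then show ?thesis using c0 by simp
    qed
    finally show ?thesis .
  qed
  then show ?thesis by (simp add: vec_eq_iff mat_def)
qed

lemma Sinv_dS:
  fixes v :: "complex^'m::finite"
  assumes hv: "\<And>k. v$k * cnj (v$k) = 1"
  shows "(Sinv_m v A s ** dS_m v K g) $ a $ b =
     K * v$a * cnj (v$b) * ((g a - g b)/s - A/(s*(s + A * of_nat CARD('m))) * (sum g UNIV - of_nat CARD('m) * g b))"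
proof -
  define kk where "kk = A/(s*(s + A * of_nat CARD('m)))"
  have "(Sinv_m v A s ** dS_m v K g) $ a $ b =
      (\<Sum>k\<in>UNIV. (if a = k then K * (g a - g b) * v$a * cnj (v$b) / s else 0)
                 - kk * K * v$a * cnj(v$b) * (g k - g b) * (cnj (v$k) * v$k))"
    unfolding dS_m_def Sinv_m_def matrix_matrix_mult_def kk_def[symmetric]
    by (simp only: vec_lambda_beta, intro sum.cong refl) (auto simp: algebra_simps diff_divide_distrib)
  also have "\<dots> = K * (g a - g b) * v$a * cnj (v$b) / s - (\<Sum>k\<in>UNIV. kk * K * v$a * cnj(v$b) * (g k - g b))"
    using hv by (simp add: sum_subtractf mult.commute)
  also have "\<dots> = K * (g a - g b) * v$a * cnj (v$b) / s - kk * K * v$a * cnj(v$b) * (\<Sum>k\<in>UNIV. (g k - g b))"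
    by (simp add: sum_distrib_left)
  also have "(\<Sum>k\<in>UNIV. (g k - g b)) = sum g UNIV - of_nat CARD('m) * g b"
    by (simp add: sum_subtractf)
  also have "K * (g a - g b) * v$a * cnj (v$b) / s - kk * K * v$a * cnj(v$b) * (sum g UNIV - of_nat CARD('m) * g b)
     = K * v$a * cnj (v$b) * ((g a - g b)/s - kk * (sum g UNIV - of_nat CARD('m) * g b))"
    by (simp add: right_diff_distrib mult.commute mult.left_commute)
  finally show ?thesis unfolding kk_def .
qed

lemma trace_XY:
  fixes v :: "complex^'m::finite" and X Y :: "complex^'m^'m"
  assumes hv: "\<And>k. v$k * cnj (v$k) = 1"
    and X: "\<And>a b. X $ a $ b = K * v$a * cnj (v$b) * x a b"
    and Y: "\<And>a b. Y $ a $ b = K * v$a * cnj (v$b) * y a b"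
  shows "trace (X ** Y) = K^2 * (\<Sum>a\<in>UNIV. \<Sum>b\<in>UNIV. x a b * y b a)"
proof -
  have "trace (X ** Y) = (\<Sum>a\<in>UNIV. \<Sum>b\<in>UNIV. K^2 * (x a b * y b a) * ((v$a * cnj (v$a)) * (v$b * cnj (v$b))))"
    unfolding trace_def matrix_matrix_mult_def X Y
    by (simp add: algebra_simps power2_eq_square)
  also have "\<dots> = K^2 * (\<Sum>a\<in>UNIV. \<Sum>b\<in>UNIV. x a b * y b a)"
    using hv by (simp add: sum_distrib_left)
  finally show ?thesis .
qed

lemma double_sum_id:
  fixes g e :: "'m::finite \<Rightarrow> complex"
  shows "(\<Sum>a\<in>UNIV. \<Sum>b\<in>UNIV. (P * g a + (Q * of_nat CARD('m) - P) * g b - Q * sum g UNIV) *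
            (P * e b + (Q * of_nat CARD('m) - P) * e a - Q * sum e UNIV))
      = 2 * P * (Q * of_nat CARD('m) - P) * (of_nat CARD('m) * (\<Sum>a\<in>UNIV. g a * e a) - sum g UNIV * sum e UNIV)"
proof -
  define M :: complex where "M = of_nat CARD('m)"
  define G where "G = sum g UNIV"
  define E where "E = sum e UNIV"
  define R where "R = Q * M - P"
  define H where "H = (\<Sum>a\<in>UNIV. g a * e a)"
  have "(\<Sum>a\<in>UNIV. \<Sum>b\<in>UNIV. (P * g a + R * g b - Q * G) * (P * e b + R * e a - Q * E))
     = (\<Sum>a\<in>UNIV. \<Sum>b\<in>UNIV. P*P*(g a * e b) + P*R*(g a * e a) - P*Q*E * g a + R*P*(g b * e b) + R*R*(g b * e a)
          - R*Q*E*g b - Q*P*G * e b - Q*R*G * e a + Q*Q*G*E)"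
    by (simp add: algebra_simps)
  also have "\<dots> = P*P*G*E + P*R*M*H - P*Q*E*M*G + R*P*M*H + R*R*G*E - R*Q*E*M*G - Q*P*G*M*E - Q*R*G*M*E + Q*Q*M*M*G*E"
    unfolding G_def E_def H_def M_def
    by (simp add: sum.distrib sum_subtractf sum_distrib_left[symmetric] sum_distrib_right[symmetric] algebra_simps, simp add: sum_distrib_left mult_ac)
  also have "\<dots> = 2 * P * R * (M * H - G * E)"
    unfolding R_def by (simp add: algebra_simps power2_eq_square)
  finally show ?thesis unfolding M_def G_def E_def R_def H_def .
qed

lemma trace_formula:
  fixes v :: "complex^'m::finite" and g e :: "'m \<Rightarrow> complex"
  assumes hv: "\<And>k. v$k * cnj (v$k) = 1"
  shows "trace (Sinv_m v A s ** dS_m v K g ** Sinv_m v A s ** dS_m v K e) =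
    K^2 * (2 * (1/s) * (A/(s*(s + A * of_nat CARD('m))) * of_nat CARD('m) - 1/s) *
       (of_nat CARD('m) * (\<Sum>a\<in>UNIV. g a * e a) - sum g UNIV * sum e UNIV))"
proof -
  define kk where "kk = A/(s*(s + A * of_nat CARD('m)))"
  have "Sinv_m v A s ** dS_m v K g ** Sinv_m v A s ** dS_m v K e
      = (Sinv_m v A s ** dS_m v K g) ** (Sinv_m v A s ** dS_m v K e)"
    by (simp add: matrix_mul_assoc)
  also have "trace \<dots> = K^2 * (\<Sum>a\<in>UNIV. \<Sum>b\<in>UNIV.
       ((g a - g b)/s - kk * (sum g UNIV - of_nat CARD('m) * g b)) *
       ((e b - e a)/s - kk * (sum e UNIV - of_nat CARD('m) * e a)))"
    by (rule trace_XY[OF hv]) (simp_all add: Sinv_dS[OF hv] kk_def)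
  also have "(\<Sum>a\<in>UNIV. \<Sum>b\<in>UNIV.
       ((g a - g b)/s - kk * (sum g UNIV - of_nat CARD('m) * g b)) *
       ((e b - e a)/s - kk * (sum e UNIV - of_nat CARD('m) * e a)))
     = (\<Sum>a\<in>UNIV. \<Sum>b\<in>UNIV. ((1/s) * g a + (kk * of_nat CARD('m) - 1/s) * g b - kk * sum g UNIV) *
            ((1/s) * e b + (kk * of_nat CARD('m) - 1/s) * e a - kk * sum e UNIV))"
    by (intro sum.cong refl) (simp add: algebra_simps diff_divide_distrib)
  also have "\<dots> = 2 * (1/s) * (kk * of_nat CARD('m) - 1/s) * (of_nat CARD('m) * (\<Sum>a\<in>UNIV. g a * e a) - sum g UNIV * sum e UNIV)"
    by (rule double_sum_id)
  finally show ?thesis unfolding kk_def .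
qed



lemma hvd_vec:
  fixes f :: "real \<Rightarrow> 'a::real_normed_vector^'n::finite"
  assumes "\<And>i. ((\<lambda>t. f t $ i) has_vector_derivative D $ i) (at x)"
  shows "(f has_vector_derivative D) (at x)"
proof -
  have "((\<lambda>y. (f y $ i - f x $ i - (y - x) *\<^sub>R D $ i) /\<^sub>R norm (y - x)) \<longlongrightarrow> 0) (at x)" for i
    using assms[of i] by (simp add: has_vector_derivative_def has_derivative_within[where s=UNIV] inverse_eq_divide diff_diff_eq)
  then have "((\<lambda>y. \<chi> i. (f y $ i - f x $ i - (y - x) *\<^sub>R D $ i) /\<^sub>R norm (y - x)) \<longlongrightarrow> (\<chi> i. 0)) (at x)"
    by (rule tendsto_vec_lambda)
  moreover have "(\<lambda>y. \<chi> i. (f y $ i - f x $ i - (y - x) *\<^sub>R D $ i) /\<^sub>R norm (y - x))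
     = (\<lambda>y. (f y - f x - (y - x) *\<^sub>R D) /\<^sub>R norm (y - x))"
    by (rule ext) (simp add: vec_eq_iff)
  ultimately have "((\<lambda>y. (f y - f x - (y - x) *\<^sub>R D) /\<^sub>R norm (y - x)) \<longlongrightarrow> 0) (at x)"
    by (simp add: zero_vec_def)
  then show ?thesis
    by (simp add: has_vector_derivative_def has_derivative_within[where s=UNIV] bounded_linear_scaleR_left inverse_eq_divide diff_diff_eq)
qed

lemma norm_deriv:
  fixes p q :: "real^'d::finite"
  assumes "p \<noteq> q"
  shows "((\<lambda>t. norm (p + t *\<^sub>R axis i 1 - q)) has_real_derivative ((p - q) $ i / norm (p - q))) (at 0)"
proof -
  have d1: "((\<lambda>t. p + t *\<^sub>R axis i 1 - q) has_derivative (\<lambda>t. t *\<^sub>R axis i 1)) (at 0)"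
    by (auto intro!: derivative_eq_intros)
  have d2: "(norm has_derivative (\<lambda>h. h \<bullet> sgn (p - q))) (at ((\<lambda>t. p + t *\<^sub>R axis i 1 - q) 0))"
    using has_derivative_norm[of "p - q"] assms by simp
  have "((\<lambda>t. norm (p + t *\<^sub>R axis i 1 - q)) has_derivative (\<lambda>t. (t *\<^sub>R axis i 1) \<bullet> sgn (p - q))) (at 0)"
    using diff_chain_at[OF d1 d2] by (simp add: o_def)
  moreover have "(\<lambda>t. (t *\<^sub>R axis i 1) \<bullet> sgn (p - q)) = (*) ((p - q) $ i / norm (p - q))"
    by (rule ext) (simp add: inner_axis' sgn_div_norm divide_inverse mult_ac)
  ultimately show ?thesis by (simp add: has_field_derivative_def)
qed

lemma v_deriv:
  fixes p q :: "real^'d::finite"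
  assumes pq: "p \<noteq> q"
  shows "((\<lambda>t. exp (- \<i> * of_real (2*pi*f*(norm (p + t *\<^sub>R axis i 1 - q)/c)))) has_vector_derivative
     (exp (- \<i> * of_real (2*pi*f*(norm (p - q)/c))) * (- \<i> * of_real (2*pi*f*((p-q)$i/norm(p-q)/c))))) (at 0)"
proof -
  define u where "u = (\<lambda>t::real. - \<i> * complex_of_real (2*pi*f*(norm (p + t *\<^sub>R axis i 1 - q)/c)))"
  have h: "((\<lambda>t. 2*pi*f*(norm (p + t *\<^sub>R axis i 1 - q)/c)) has_real_derivative (2*pi*f*((p-q)$i/norm(p-q)/c))) (at 0)"
    by (intro DERIV_cmult DERIV_cdivide norm_deriv pq)
  have du: "(u has_vector_derivative (- \<i> * of_real (2*pi*f*((p-q)$i/norm(p-q)/c)))) (at 0)"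
    unfolding u_def by (intro has_vector_derivative_mult_right has_vector_derivative_of_real h)
  have de: "(exp has_field_derivative exp (u 0)) (at (u 0) within u ` UNIV)"
    by (rule has_field_derivative_at_within) (rule DERIV_exp)
  have "((exp \<circ> u) has_vector_derivative ((- \<i> * of_real (2*pi*f*((p-q)$i/norm(p-q)/c))) * exp (u 0))) (at 0)"
    using field_vector_diff_chain_within[OF du de] .
  then show ?thesis unfolding u_def o_def
    by (simp only: mult.commute[of "- \<i> * _" "exp _"] scaleR_zero_left add_0_right)
qed

lemma entry_deriv:
  fixes va vb :: "real \<Rightarrow> complex"
  assumes da: "(va has_vector_derivative va') (at 0)" and db: "(vb has_vector_derivative vb') (at 0)"
  shows "((\<lambda>t. Ac * va t * cnj (vb t) + C) has_vector_derivative (Ac * (va 0 * cnj vb' + va' * cnj (vb 0)))) (at 0)"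
proof -
  have "((\<lambda>t. (Ac * va t) * cnj (vb t)) has_vector_derivative (Ac * va 0 * cnj vb' + Ac * va' * cnj (vb 0))) (at 0)"
    by (intro has_vector_derivative_mult has_vector_derivative_mult_right has_vector_derivative_cnj da db)
  then show ?thesis
    by (subst has_vector_derivative_add_const) (simp add: algebra_simps)
qed

lemma dSmat_eq:
  fixes pp :: "'m::finite \<Rightarrow> real^'d::finite"
  assumes pd: "\<forall>m. p \<noteq> pp m"
  shows "dSmat c pp fL fH SL SH N0 lam i f p =
     dS_m (steer c pp f p) (of_real (Ss fL fH SL SH f * (Bgain fL fH SL SH N0 lam f)^2) * (- \<i> * of_real (2*pi*f)))
        (\<lambda>m. of_real (gvec c pp p i $ m))"
proof -
  define Ac where "Ac = complex_of_real (Ss fL fH SL SH f * (Bgain fL fH SL SH N0 lam f)^2)"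
  define vv where "vv = (\<lambda>m t. exp (- \<i> * of_real (2*pi*f*(norm (p + t *\<^sub>R axis i 1 - pp m)/c))))"
  have dv: "(vv m has_vector_derivative (steer c pp f p $ m * (- \<i> * of_real (2*pi*f) * of_real (gvec c pp p i $ m)))) (at 0)" for m
  proof -
    have "(vv m has_vector_derivative
     (exp (- \<i> * of_real (2*pi*f*(norm (p - pp m)/c))) * (- \<i> * of_real (2*pi*f*((p - pp m)$i/norm(p - pp m)/c))))) (at 0)"
      unfolding vv_def using v_deriv pd by blast
    moreover have "exp (- \<i> * of_real (2*pi*f*(norm (p - pp m)/c))) * (- \<i> * of_real (2*pi*f*((p - pp m)$i/norm(p - pp m)/c)))
       = steer c pp f p $ m * (- \<i> * of_real (2*pi*f) * of_real (gvec c pp p i $ m))"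
      by (simp add: steer_def tau_def gvec_def mult_ac)
    ultimately show ?thesis by simp
  qed
  have "((\<lambda>t. Smat c pp fL fH SL SH N0 lam f (p + t *\<^sub>R axis i 1)) has_vector_derivative
     dS_m (steer c pp f p) (Ac * (- \<i> * of_real (2*pi*f))) (\<lambda>m. of_real (gvec c pp p i $ m))) (at 0)"
  proof (rule hvd_vec, rule hvd_vec)
    fix a b
    have e1: "((\<lambda>t. Ac * vv a t * cnj (vv b t) + (if a = b then complex_of_real (Sw fL fH SL SH N0 lam f) else 0))
       has_vector_derivative (Ac * (vv a 0 * cnj (steer c pp f p $ b * (- \<i> * of_real (2*pi*f) * of_real (gvec c pp p i $ b)))
            + (steer c pp f p $ a * (- \<i> * of_real (2*pi*f) * of_real (gvec c pp p i $ a))) * cnj (vv b 0)))) (at 0)"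
      by (rule entry_deriv[OF dv dv])
    have e2: "vv m 0 = steer c pp f p $ m" for m
      by (simp add: vv_def steer_def tau_def)
    have e3: "(\<lambda>t. Smat c pp fL fH SL SH N0 lam f (p + t *\<^sub>R axis i 1) $ a $ b)
       = (\<lambda>t. Ac * vv a t * cnj (vv b t) + (if a = b then complex_of_real (Sw fL fH SL SH N0 lam f) else 0))"
      by (simp add: Smat_def vv_def steer_def tau_def Ac_def)
    show "((\<lambda>t. Smat c pp fL fH SL SH N0 lam f (p + t *\<^sub>R axis i 1) $ a $ b) has_vector_derivative
         dS_m (steer c pp f p) (Ac * (- \<i> * of_real (2*pi*f))) (\<lambda>m. of_real (gvec c pp p i $ m)) $ a $ b) (at 0)"
    proof -
      have "Ac * (steer c pp f p $ a * cnj (steer c pp f p $ b * (- \<i> * of_real (2*pi*f) * of_real (gvec c pp p i $ b)))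
            + (steer c pp f p $ a * (- \<i> * of_real (2*pi*f) * of_real (gvec c pp p i $ a))) * cnj (steer c pp f p $ b))
         = dS_m (steer c pp f p) (Ac * (- \<i> * of_real (2*pi*f))) (\<lambda>m. of_real (gvec c pp p i $ m)) $ a $ b"
        by (simp add: dS_m_def algebra_simps)
      with e1 e2 e3 show ?thesis by simp
    qed
  qed
  then show ?thesis unfolding dSmat_def Ac_def by (rule vector_derivative_at)
qed

lemma Pcent_apply: "(Pcent *v (x::real^'m::finite)) $ k = x $ k - (\<Sum>j\<in>UNIV. x $ j) / real CARD('m)"
proof -
  have "(Pcent *v x) $ k = (\<Sum>j\<in>UNIV. (if k = j then x $ j else 0) - x $ j / real CARD('m))"
    unfolding Pcent_def matrix_vector_mult_def mat_def
    by (simp, intro sum.cong refl) (auto simp: algebra_simps)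
  also have "\<dots> = x $ k - (\<Sum>j\<in>UNIV. x $ j) / real CARD('m)"
    by (simp add: sum_subtractf sum_divide_distrib)
  finally show ?thesis .
qed

lemma Pcent_inner:
  "(Pcent *v (x::real^'m::finite)) \<bullet> (Pcent *v y) =
     (\<Sum>k\<in>UNIV. x $ k * y $ k) - (\<Sum>k\<in>UNIV. x $ k) * (\<Sum>k\<in>UNIV. y $ k) / real CARD('m)"
proof -
  define X where "X = (\<Sum>k\<in>UNIV. x $ k)"
  define Y where "Y = (\<Sum>k\<in>UNIV. y $ k)"
  define M where "M = real CARD('m)"
  have M0: "M \<noteq> 0" unfolding M_def by simp
  have "(Pcent *v x) \<bullet> (Pcent *v y) = (\<Sum>k\<in>UNIV. (x $ k - X / M) * (y $ k - Y / M))"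
    by (simp add: inner_vec_def Pcent_apply X_def Y_def M_def)
  also have "\<dots> = (\<Sum>k\<in>UNIV. x $ k * y $ k - (Y/M) * x $ k - (X/M) * y $ k + X*Y/(M*M))"
    by (intro sum.cong refl) (simp add: algebra_simps)
  also have "\<dots> = (\<Sum>k\<in>UNIV. x $ k * y $ k) - (Y/M) * X - (X/M) * Y + M * (X*Y/(M*M))"
  proof -
    have s1: "(\<Sum>k\<in>UNIV. (Y/M) * x $ k) = (Y/M) * X" unfolding X_def by (simp add: sum_distrib_left)
    have s2: "(\<Sum>k\<in>UNIV. (X/M) * y $ k) = (X/M) * Y" unfolding Y_def by (simp add: sum_distrib_left)
    have s3: "(\<Sum>k\<in>(UNIV::'m set). X*Y/(M*M)) = M * (X*Y/(M*M))" by (simp add: M_def)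
    show ?thesis by (simp only: sum.distrib sum_subtractf s1 s2 s3)
  qed
  also have "\<dots> = (\<Sum>k\<in>UNIV. x $ k * y $ k) - X * Y / M"
    using M0 by (simp add: field_simps)
  finally show ?thesis unfolding X_def Y_def M_def .
qed

lemma steer_unit: "steer c pp f p $ k * cnj (steer c pp f p $ k) = 1"
proof -
  have "steer c pp f p $ k * cnj (steer c pp f p $ k)
      = exp (- \<i> * of_real (2 * pi * f * tau c pp p k) + cnj (- \<i> * of_real (2 * pi * f * tau c pp p k)))"
    unfolding steer_def vec_lambda_beta exp_cnj exp_add[symmetric] ..
  also have "\<dots> = 1" by simp
  finally show ?thesis .
qed

lemma matrix_inv_eqI:
  fixes A X :: "'a::field^'n::finite^'n"
  assumes AX: "A ** X = mat 1"
  shows "matrix_inv A = X"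
proof -
  have XA: "X ** A = mat 1" using AX matrix_left_right_inverse by blast
  have Y: "A ** matrix_inv A = mat 1 \<and> matrix_inv A ** A = mat 1"
    unfolding matrix_inv_def by (rule someI[of _ X]) (use AX XA in simp)
  have "matrix_inv A = matrix_inv A ** (A ** X)" by (simp add: AX matrix_mul_rid)
  also have "\<dots> = (matrix_inv A ** A) ** X" by (simp add: matrix_mul_assoc)
  also have "\<dots> = X" using Y by (simp add: matrix_mul_lid)
  finally show ?thesis .
qed

lemma integrand_eq:
  fixes pp :: "'m::finite \<Rightarrow> real^'d::finite"
  assumes pd: "\<forall>m. p \<noteq> pp m" and N0: "N0 > 0" and lam: "lam \<ge> 0"
    and Bpos: "Bgain fL fH SL SH N0 lam f > 0" and Spos: "Ss fL fH SL SH f > 0"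
  shows "fisher_integrand c pp fL fH SL SH N0 lam p i j f =
     complex_of_real (4 * pi^2 * f^2 * band_w CARD('m) N0 lam (Ss fL fH SL SH f) (Bgain fL fH SL SH N0 lam f)
        * Gmat c pp p $ i $ j)"
proof -
  define B where "B = Bgain fL fH SL SH N0 lam f"
  define Sb where "Sb = Ss fL fH SL SH f"
  define A where "A = Sb * B^2"
  define s where "s = B^2 * N0 + lam * B"
  define v where "v = steer c pp f p"
  define M where "M = real CARD('m)"
  define w where "w = 2 * pi * f"
  have Mpos: "M > 0" unfolding M_def by simp
  have spos: "s > 0" unfolding s_def using Bpos N0 lam unfolding B_def
    by (simp add: add_pos_nonneg)
  have Apos: "A > 0" unfolding A_def using Bpos Spos unfolding B_def Sb_def by simp
  have sApos: "s + A * M > 0" by (intro add_pos_pos mult_pos_pos spos Apos Mpos)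
  have hv: "\<And>k. v$k * cnj (v$k) = 1" unfolding v_def by (rule steer_unit)
  have Sm: "Smat c pp fL fH SL SH N0 lam f p = S_m v (of_real A) (of_real s)"
    by (simp add: Smat_def S_m_def vec_eq_iff A_def s_def v_def B_def Sb_def Sw_def)
  have sc: "complex_of_real s \<noteq> 0" using spos by simp
  have sAc: "complex_of_real s + complex_of_real A * of_nat CARD('m) \<noteq> 0"
  proof -
    have cM: "(of_nat CARD('m) :: complex) = complex_of_real M" unfolding M_def by simp
    have "complex_of_real s + complex_of_real A * complex_of_real M = complex_of_real (s + A * M)"
      by simp
    then show ?thesis unfolding cM using sApos by (metis of_real_eq_0_iff less_irrefl)
  qed
  have inv: "matrix_inv (Smat c pp fL fH SL SH N0 lam f p) = Sinv_m v (of_real A) (of_real s)"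
    unfolding Sm by (rule matrix_inv_eqI, rule S_Sinv[OF hv sc sAc])
  define K where "K = complex_of_real A * (- \<i> * of_real w)"
  have dS: "dSmat c pp fL fH SL SH N0 lam k f p = dS_m v K (\<lambda>m. of_real (gvec c pp p k $ m))" for k
    unfolding dSmat_eq[OF pd] K_def v_def A_def Sb_def B_def w_def by simp
  define Gr where "Gr = (\<Sum>m\<in>UNIV. gvec c pp p i $ m)"
  define Er where "Er = (\<Sum>m\<in>UNIV. gvec c pp p j $ m)"
  define Hr where "Hr = (\<Sum>m\<in>UNIV. gvec c pp p i $ m * gvec c pp p j $ m)"
  have "fisher_integrand c pp fL fH SL SH N0 lam p i j f =
     trace (Sinv_m v (of_real A) (of_real s) ** dS_m v K (\<lambda>m. of_real (gvec c pp p i $ m))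
        ** Sinv_m v (of_real A) (of_real s) ** dS_m v K (\<lambda>m. of_real (gvec c pp p j $ m)))"
    unfolding fisher_integrand_def Let_def inv dS ..
  also have "\<dots> = K^2 * (2 * (1/of_real s) * (of_real A/(of_real s*(of_real s + of_real A * of_nat CARD('m))) * of_nat CARD('m) - 1/of_real s) *
       (of_nat CARD('m) * of_real Hr - of_real Gr * of_real Er))"
    unfolding trace_formula[OF hv] Gr_def Er_def Hr_def by simp
  also have "\<dots> = complex_of_real (- ((A*w)^2) * (2*(1/s)*(A/(s*(s+A*M))*M - 1/s)*(M*Hr - Gr*Er)))"
  proof -
    have K2: "K^2 = complex_of_real (- ((A*w)^2))" unfolding K_def by (simp add: power_mult_distrib)
    have cM: "(of_nat CARD('m) :: complex) = complex_of_real M" unfolding M_def by simp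
    show ?thesis unfolding K2 cM by simp
  qed
  also have "- ((A*w)^2) * (2*(1/s)*(A/(s*(s+A*M))*M - 1/s)*(M*Hr - Gr*Er)) = 2 * A^2 * w^2 / (s * (s + A * M)) * (M * Hr - Gr * Er)"
  proof -
    have e: "A/(s*(s+A*M))*M - 1/s = -1/(s+A*M)"
    proof -
      obtain D where D: "D = s + A*M" by blast
      have Dp: "D > 0" using D sApos by simp
      have AM: "A*M = D - s" using D by simp
      have "A/(s*D)*M = (A*M)/(s*D)" by simp
      also have "\<dots> = (D - s)/(s*D)" using AM by simp
      also have "\<dots> = 1/s - 1/D" using spos Dp by (simp add: field_simps)
      finally show ?thesis using D by simp
    qed
    have g: "- ((A*w)^2) * (2*(1/s)*(-1/D)*X) = 2 * A^2 * w^2 / (s * D) * X" if "D > 0" for D X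
      using that spos by (simp add: field_simps power2_eq_square)
    show ?thesis unfolding e by (rule g[OF sApos])
  qed
  also have "2 * A^2 * w^2 / (s * (s + A * M)) * (M * Hr - Gr * Er) =
     4 * pi^2 * f^2 * band_w CARD('m) N0 lam Sb B * Gmat c pp p $ i $ j"
  proof -
    have G: "Gmat c pp p $ i $ j = Hr - Gr * Er / M"
      by (simp add: Gmat_def Pcent_inner Hr_def Gr_def Er_def M_def)
    have bw: "band_w CARD('m) N0 lam Sb B = 2 * M * (A/s)^2 / (1 + M * (A/s))"
      using Bpos unfolding band_w_def B_def[symmetric] by (simp add: Let_def A_def s_def M_def)
    have h1: "1 + M*(A/s) = (s + A*M)/s" using spos by (simp add: field_simps)
    have g: "2 * A^2 * (2*pi*f)^2 / (s * D) * (M * Hr - Gr * Er) =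
       4 * pi^2 * f^2 * (2 * M * (A/s)^2 / (D/s)) * (Hr - Gr * Er / M)" if "D > 0" for D
      using that spos Mpos by (simp add: field_simps power2_eq_square)
    show ?thesis unfolding G bw w_def h1 by (rule g[OF sApos])
  qed
  finally show ?thesis unfolding Sb_def B_def .
qed



lemma poly_int:
  fixes a b k :: real
  assumes "a \<le> b"
  shows "((\<lambda>x. k * x^2) has_integral (k * (b^3 - a^3) / 3)) {a..b}"
proof -
  have "((\<lambda>x. k * x^2) has_integral ((\<lambda>x. k * x^3 / 3) b - (\<lambda>x. k * x^3 / 3) a)) {a..b}"
  proof (rule fundamental_theorem_of_calculus[OF assms])
    fix x assume "x \<in> {a..b}"
    have "((\<lambda>x. k * x^3 / 3) has_real_derivative (k * x^2)) (at x within {a..b})"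
      by (auto intro!: derivative_eq_intros simp: power2_eq_square)
    then show "((\<lambda>x. k * x^3 / 3) has_vector_derivative (k * x^2)) (at x within {a..b})"
      by (simp add: has_real_derivative_iff_has_vector_derivative)
  qed
  then show ?thesis by (simp add: diff_divide_distrib right_diff_distrib)
qed

lemma piece_int:
  fixes fL fH k wL wH :: real
  assumes "0 < fL" "fL < fH"
  shows "((\<lambda>x. k * x^2 * (if \<bar>x\<bar> \<le> fL then wL else wH)) has_integral
           (k * wL * 2 * fL^3 / 3 + k * wH * 2 * (fH^3 - fL^3) / 3)) {-fH..fH}"
proof -
  let ?q = "\<lambda>x. k * x^2 * (if \<bar>x\<bar> \<le> fL then wL else wH)"
  have i1: "(?q has_integral ((k*wH) * ((-fL)^3 - (-fH)^3) / 3)) {-fH..-fL}"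
  proof -
    have "((\<lambda>x. (k*wH) * x^2) has_integral ((k*wH) * ((-fL)^3 - (-fH)^3) / 3)) {-fH..-fL}"
      using assms by (intro poly_int) simp
    moreover have "?q x = (k*wH) * x^2" if "x \<in> {-fH..-fL} - {-fL}" for x
      using that assms by auto
    ultimately show ?thesis using has_integral_spike_finite_eq[of "{-fL}" "{-fH..-fL}" ?q "\<lambda>x. (k*wH) * x^2"]
      by simp
  qed
  have i2: "(?q has_integral ((k*wL) * (fL^3 - (-fL)^3) / 3)) {-fL..fL}"
  proof -
    have "((\<lambda>x. (k*wL) * x^2) has_integral ((k*wL) * (fL^3 - (-fL)^3) / 3)) {-fL..fL}"
      using assms by (intro poly_int) simp
    moreover have "?q x = (k*wL) * x^2" if "x \<in> {-fL..fL}" for x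
      using that assms by auto
    ultimately show ?thesis using has_integral_cong[of "{-fL..fL}" ?q "\<lambda>x. (k*wL) * x^2"]
      by simp
  qed
  have i3: "(?q has_integral ((k*wH) * (fH^3 - fL^3) / 3)) {fL..fH}"
  proof -
    have "((\<lambda>x. (k*wH) * x^2) has_integral ((k*wH) * (fH^3 - fL^3) / 3)) {fL..fH}"
      using assms by (intro poly_int) simp
    moreover have "?q x = (k*wH) * x^2" if "x \<in> {fL..fH} - {fL}" for x
      using that assms by auto
    ultimately show ?thesis using has_integral_spike_finite_eq[of "{fL}" "{fL..fH}" ?q "\<lambda>x. (k*wH) * x^2"]
      by simp
  qed
  have i12: "(?q has_integral ((k*wH) * ((-fL)^3 - (-fH)^3) / 3 + (k*wL) * (fL^3 - (-fL)^3) / 3)) {-fH..fL}"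
    by (rule has_integral_combine[OF _ _ i1 i2]) (use assms in auto)
  have "(?q has_integral ((k*wH) * ((-fL)^3 - (-fH)^3) / 3 + (k*wL) * (fL^3 - (-fL)^3) / 3
       + (k*wH) * (fH^3 - fL^3) / 3)) {-fH..fH}"
    by (rule has_integral_combine[OF _ _ i12 i3]) (use assms in auto)
  moreover have "(k*wH) * ((-fL)^3 - (-fH)^3) / 3 + (k*wL) * (fL^3 - (-fL)^3) / 3
       + (k*wH) * (fH^3 - fL^3) / 3 = k * wL * 2 * fL^3 / 3 + k * wH * 2 * (fH^3 - fL^3) / 3"
    by (simp add: field_simps)
  ultimately show ?thesis by (simp only:)
qed

lemma lam_lt:
  fixes fL fH SL SH N0 R lam :: real
  assumes "0 < fL" "fL < fH" "0 < SH" "SH < SL" "N0 > 0" "R > 0" "lam \<ge> 0"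
    and water: "R = rate_of_level fL fH SL SH N0 lam"
  shows "lam < SL + N0"
proof (rule ccontr)
  assume "\<not> lam < SL + N0"
  then have l: "lam \<ge> SL + N0" by simp
  have lp: "lam > 0" using l assms by simp
  have "log 2 ((SL + N0) / lam) \<le> 0" using l lp assms by simp
  moreover have "log 2 ((SH + N0) / lam) \<le> 0" using l lp assms by simp
  ultimately have "R = 0" unfolding water rate_of_level_def by simp
  then show False using assms by simp
qed

lemma band_w_pos:
  assumes "N0 > 0" "lam \<ge> 0" "Sb > 0" "Bb > 0" "M > 0"
  shows "band_w M N0 lam Sb Bb > 0"
proof -
  have sw: "Bb^2 * N0 + lam * Bb > 0" using assms by (simp add: add_pos_nonneg)
  then have g: "Sb * Bb^2 / (Bb^2 * N0 + lam * Bb) > 0" using assms by simp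
  have h: "2 * real M * \<gamma>^2 / (1 + real M * \<gamma>) > 0" if "\<gamma> > 0" for \<gamma>
    using that assms by (simp add: add_pos_pos)
  show ?thesis using assms h[OF g] unfolding band_w_def Let_def by simp
qed

lemma band_w_nonneg:
  assumes "N0 > 0" "lam \<ge> 0" "Sb > 0"
  shows "band_w M N0 lam Sb Bb \<ge> 0"
proof (cases "Bb > 0 \<and> M > 0")
  case True then show ?thesis using band_w_pos[OF assms] by (simp add: less_imp_le)
next
  case False then show ?thesis unfolding band_w_def by auto
qed

lemma scaleR_matrix_mult:
  fixes A B :: "real^'n::finite^'n"
  shows "(a *\<^sub>R A) ** (b *\<^sub>R B) = (a * b) *\<^sub>R (A ** B)"
  by (simp add: matrix_matrix_mult_def vec_eq_iff sum_distrib_left mult_ac)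

lemma invertible_right:
  fixes A :: "real^'n::finite^'n"
  assumes "invertible A"
  shows "A ** matrix_inv A = mat 1"
proof -
  obtain A' where "A ** A' = mat 1 \<and> A' ** A = mat 1" using assms unfolding invertible_def by blast
  then have "A ** matrix_inv A = mat 1 \<and> matrix_inv A ** A = mat 1"
    unfolding matrix_inv_def by (rule someI)
  then show ?thesis by simp
qed

lemma inv_scaled:
  fixes G :: "real^'n::finite^'n"
  assumes "invertible G" "k \<noteq> 0"
  shows "matrix_inv (k *\<^sub>R G) = (1/k) *\<^sub>R matrix_inv G"
  by (rule matrix_inv_eqI) (simp add: scaleR_matrix_mult invertible_right[OF assms(1)] assms(2))

theorem theorem1:
  fixes pp :: "'m::finite \<Rightarrow> real^'d::finite"
    and p :: "real^'d"
    and c fL fH SL SH N0 R lam :: real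
  assumes M2: "CARD('m) \<ge> 2"
    and c_pos: "c > 0"
    and fL_pos: "0 < fL" and fL_fH: "fL < fH"
    and SH_pos: "0 < SH" and SH_SL: "SH < SL"
    and N0_pos: "N0 > 0"
    and R_pos: "R > 0"
    and lam_nonneg: "lam \<ge> 0"
    and water: "R = rate_of_level fL fH SL SH N0 lam"
    and p_distinct: "\<forall>m. p \<noteq> pp m"
  shows "(\<forall>i j. (fisher_integrand c pp fL fH SL SH N0 lam p i j has_integral
                  complex_of_real (2 * (4 * pi^2 / 3)
                     * (J_L CARD('m) fL SL N0 lam + J_H CARD('m) fL fH SH N0 lam)
                     * Gmat c pp p $ i $ j))
                 (active_band fL fH SL SH N0 lam))
       \<and> J_RD c pp fL fH SL SH N0 lam p
           = (4 * pi^2 / 3 * (J_L CARD('m) fL SL N0 lam + J_H CARD('m) fL fH SH N0 lam))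
               *\<^sub>R Gmat c pp p
       \<and> (invertible (Gmat c pp p) \<longrightarrow>
           matrix_inv (J_RD c pp fL fH SL SH N0 lam p)
             = (3 / (4 * pi^2) * (1 / (J_L CARD('m) fL SL N0 lam + J_H CARD('m) fL fH SH N0 lam)))
                 *\<^sub>R matrix_inv (Gmat c pp p))"
proof -
  define M where "M = CARD('m)"
  have Mpos: "M > 0" unfolding M_def by simp
  have lamL: "lam < SL + N0" by (rule lam_lt[OF fL_pos fL_fH SH_pos SH_SL N0_pos R_pos lam_nonneg water])
  define BL where "BL = max 0 (1 - lam/(SL+N0))"
  define BH where "BH = max 0 (1 - lam/(SH+N0))"
  have BLpos: "BL > 0" unfolding BL_def using lamL N0_pos SH_pos SH_SL by simp
  define wL where "wL = band_w M N0 lam SL BL"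
  define wH where "wH = band_w M N0 lam SH BH"
  have JL: "J_L CARD('m) fL SL N0 lam = fL^3 * wL" unfolding J_L_def wL_def BL_def M_def ..
  have JH: "J_H CARD('m) fL fH SH N0 lam = (fH^3 - fL^3) * wH" unfolding J_H_def wH_def BH_def M_def ..
  have SsL: "Ss fL fH SL SH f = SL" "Bgain fL fH SL SH N0 lam f = BL" if "\<bar>f\<bar> \<le> fL" for f
    using that fL_fH by (simp_all add: Ss_def Bgain_def BL_def)
  have SsH: "Ss fL fH SL SH f = SH" "Bgain fL fH SL SH N0 lam f = BH" if "fL < \<bar>f\<bar>" "\<bar>f\<bar> \<le> fH" for f
    using that by (simp_all add: Ss_def Bgain_def BH_def)
  have wLpos: "wL > 0" unfolding wL_def using band_w_pos N0_pos lam_nonneg SH_pos SH_SL BLpos Mpos by simp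
  have wHnn: "wH \<ge> 0" unfolding wH_def using band_w_nonneg N0_pos lam_nonneg SH_pos by simp
  have f3: "fL^3 < fH^3" using fL_pos fL_fH by (simp add: power_strict_mono)
  have Jpos: "J_L CARD('m) fL SL N0 lam + J_H CARD('m) fL fH SH N0 lam > 0"
    unfolding JL JH using wLpos wHnn f3 fL_pos by (simp add: add_pos_nonneg)
  have INT: "(fisher_integrand c pp fL fH SL SH N0 lam p i j has_integral
                  complex_of_real (2 * (4 * pi^2 / 3)
                     * (J_L CARD('m) fL SL N0 lam + J_H CARD('m) fL fH SH N0 lam)
                     * Gmat c pp p $ i $ j))
                 (active_band fL fH SL SH N0 lam)" for i j
  proof -
    define k where "k = 4 * pi^2 * Gmat c pp p $ i $ j"
    have ieq: "fisher_integrand c pp fL fH SL SH N0 lam p i j f =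
       complex_of_real (4 * pi^2 * f^2 * band_w CARD('m) N0 lam (Ss fL fH SL SH f) (Bgain fL fH SL SH N0 lam f)
        * Gmat c pp p $ i $ j)" if "Bgain fL fH SL SH N0 lam f > 0" "Ss fL fH SL SH f > 0" for f
      by (rule integrand_eq[OF p_distinct N0_pos lam_nonneg that])
    show ?thesis
    proof (cases "BH > 0")
      case True
      have "\<bar>f\<bar> \<le> fH \<and> Bgain fL fH SL SH N0 lam f > 0 \<longleftrightarrow> \<bar>f\<bar> \<le> fH" for f
      proof (cases "\<bar>f\<bar> \<le> fL")
        case True then show ?thesis using SsL(2)[of f] BLpos by simp
      next
        case False then show ?thesis using SsH(2)[of f] \<open>BH > 0\<close> by auto
      qed
      then have "active_band fL fH SL SH N0 lam = {f. \<bar>f\<bar> \<le> fH}"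
        unfolding active_band_def by blast
      also have "\<dots> = {-fH..fH}" by (auto simp: set_eq_iff abs_le_iff)
      finally have AB: "active_band fL fH SL SH N0 lam = {-fH..fH}" .
      have pt: "fisher_integrand c pp fL fH SL SH N0 lam p i j f
          = (complex_of_real \<circ> (\<lambda>x. k * x^2 * (if \<bar>x\<bar> \<le> fL then wL else wH))) f" if "f \<in> {-fH..fH}" for f
      proof (cases "\<bar>f\<bar> \<le> fL")
        case c1: True
        show ?thesis using c1 ieq[of f] SsL[OF c1] BLpos SH_pos SH_SL
          by (simp add: k_def wL_def M_def mult_ac)
      next
        case c2: False
        have "\<bar>f\<bar> \<le> fH" using that by auto
        then show ?thesis using c2 ieq[of f] SsH[of f] True SH_pos
          by (simp add: k_def wH_def M_def mult_ac)
      qed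
      have "((complex_of_real \<circ> (\<lambda>x. k * x^2 * (if \<bar>x\<bar> \<le> fL then wL else wH))) has_integral
          complex_of_real (k * wL * 2 * fL^3 / 3 + k * wH * 2 * (fH^3 - fL^3) / 3)) {-fH..fH}"
        by (rule has_integral_linear[OF piece_int[OF fL_pos fL_fH] bounded_linear_of_real])
      then have "(fisher_integrand c pp fL fH SL SH N0 lam p i j has_integral
          complex_of_real (k * wL * 2 * fL^3 / 3 + k * wH * 2 * (fH^3 - fL^3) / 3)) {-fH..fH}"
        by (rule has_integral_eq[rotated]) (simp add: pt)
      moreover have "k * wL * 2 * fL^3 / 3 + k * wH * 2 * (fH^3 - fL^3) / 3 =
          2 * (4 * pi^2 / 3) * (J_L CARD('m) fL SL N0 lam + J_H CARD('m) fL fH SH N0 lam) * Gmat c pp p $ i $ j"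
        unfolding JL JH k_def by (simp add: field_simps)
      ultimately show ?thesis unfolding AB by (simp only:)
    next
      case False
      then have BH0: "BH = 0" unfolding BH_def by simp
      then have wH0: "wH = 0" unfolding wH_def band_w_def by simp
      have "\<bar>f\<bar> \<le> fH \<and> Bgain fL fH SL SH N0 lam f > 0 \<longleftrightarrow> \<bar>f\<bar> \<le> fL" for f
      proof (cases "\<bar>f\<bar> \<le> fL")
        case True then show ?thesis using SsL(2)[of f] BLpos fL_fH by simp
      next
        case False then show ?thesis using SsH(2)[of f] BH0 by auto
      qed
      then have "active_band fL fH SL SH N0 lam = {f. \<bar>f\<bar> \<le> fL}"
        unfolding active_band_def by blast
      also have "\<dots> = {-fL..fL}" by (auto simp: set_eq_iff abs_le_iff)
      finally have AB: "active_band fL fH SL SH N0 lam = {-fL..fL}" .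
      have pt: "fisher_integrand c pp fL fH SL SH N0 lam p i j f
          = (complex_of_real \<circ> (\<lambda>x. (k * wL) * x^2)) f" if "f \<in> {-fL..fL}" for f
      proof -
        have c1: "\<bar>f\<bar> \<le> fL" using that by auto
        show ?thesis using c1 ieq[of f] SsL[OF c1] BLpos SH_pos SH_SL
          by (simp add: k_def wL_def M_def mult_ac)
      qed
      have "((complex_of_real \<circ> (\<lambda>x. (k * wL) * x^2)) has_integral
          complex_of_real ((k * wL) * (fL^3 - (-fL)^3) / 3)) {-fL..fL}"
        by (rule has_integral_linear[OF poly_int bounded_linear_of_real]) (use fL_pos in simp)
      then have "(fisher_integrand c pp fL fH SL SH N0 lam p i j has_integral
          complex_of_real ((k * wL) * (fL^3 - (-fL)^3) / 3)) {-fL..fL}"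
        by (rule has_integral_eq[rotated]) (simp add: pt)
      moreover have "(k * wL) * (fL^3 - (-fL)^3) / 3 =
          2 * (4 * pi^2 / 3) * (J_L CARD('m) fL SL N0 lam + J_H CARD('m) fL fH SH N0 lam) * Gmat c pp p $ i $ j"
        unfolding JL JH k_def wH0 by (simp add: field_simps)
      ultimately show ?thesis unfolding AB by (simp only:)
    qed
  qed
  have JRD: "J_RD c pp fL fH SL SH N0 lam p
           = (4 * pi^2 / 3 * (J_L CARD('m) fL SL N0 lam + J_H CARD('m) fL fH SH N0 lam))
               *\<^sub>R Gmat c pp p"
  proof -
    have "integral (active_band fL fH SL SH N0 lam) (fisher_integrand c pp fL fH SL SH N0 lam p i j) =
       complex_of_real (2 * (4 * pi^2 / 3)
                     * (J_L CARD('m) fL SL N0 lam + J_H CARD('m) fL fH SH N0 lam)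
                     * Gmat c pp p $ i $ j)" for i j
      by (rule integral_unique[OF INT])
    then show ?thesis unfolding J_RD_def vec_eq_iff by (simp only: Re_complex_of_real vec_lambda_beta vector_scaleR_component) simp
  qed
  show ?thesis
  proof (intro conjI allI impI)
    fix i j show "(fisher_integrand c pp fL fH SL SH N0 lam p i j has_integral
                  complex_of_real (2 * (4 * pi^2 / 3)
                     * (J_L CARD('m) fL SL N0 lam + J_H CARD('m) fL fH SH N0 lam)
                     * Gmat c pp p $ i $ j))
                 (active_band fL fH SL SH N0 lam)" by (rule INT)
  next
    show "J_RD c pp fL fH SL SH N0 lam p
           = (4 * pi^2 / 3 * (J_L CARD('m) fL SL N0 lam + J_H CARD('m) fL fH SH N0 lam))
               *\<^sub>R Gmat c pp p" by (rule JRD)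
  next
    assume inv: "invertible (Gmat c pp p)"
    have nz: "4 * pi^2 / 3 * (J_L CARD('m) fL SL N0 lam + J_H CARD('m) fL fH SH N0 lam) \<noteq> 0"
      using Jpos by simp
    show "matrix_inv (J_RD c pp fL fH SL SH N0 lam p)
             = (3 / (4 * pi^2) * (1 / (J_L CARD('m) fL SL N0 lam + J_H CARD('m) fL fH SH N0 lam)))
                 *\<^sub>R matrix_inv (Gmat c pp p)"
      unfolding JRD inv_scaled[OF inv nz] by simp
  qed
qed

end
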